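(* Fix $d\in\mathbb N$ and $1\le k\le d-1$. Let $S_\star$ be drawn uniformly from the $k$-element subsets of $[d]$. Given $S_\star$, draw $m$ i.i.d. samples $(x^{(i)},z^{(i)})$, $i=1,\dots,m$, where $x^{(i)}$ is uniform on $\{0,1\}^d$, $\pi^{(i)}$ is a uniformly random bijection $[k]\to S_\star$ (independent across $i$), and $z^{(i)}=(z^{(i)}_1,\dots,z^{(i)}_k)$ with $z^{(i)}_t=\bigoplus_{s=1}^t x^{(i)}_{\pi^{(i)}(s)}$. Then for any (possibly randomized) estimator $\hat S$ of $S_\star$ from the samples, achieving $\Pr[\hat S=S_\star]\ge1-\delta$ (probability over $S_\star$, the samples and the estimator) requires $$m\ge\frac{(1-\delta)\log\binom dk-1}{\log(k+1)}.$$ Moreover, for $k\le d/2$, this gives $m\ge\frac{(1-\delta)k\log(d/k)-1}{\log(k+1)}$. *)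

theory Defs
  imports "HOL-Probability.Probability_Mass_Function"
begin

type_synonym sample = "(nat \<Rightarrow> bool) \<times> bool list"

definition xor_list :: "bool list \<Rightarrow> bool" where
  "xor_list bs = foldr (\<lambda>a b. a \<noteq> b) bs False"

definition cube_pmf :: "nat \<Rightarrow> (nat \<Rightarrow> bool) pmf" where
  "cube_pmf d = pmf_of_set ({1..d} \<rightarrow>\<^sub>E (UNIV :: bool set))"

definition bij_pmf :: "nat \<Rightarrow> nat set \<Rightarrow> (nat \<Rightarrow> nat) pmf" where
  "bij_pmf k S = pmf_of_set {\<pi> \<in> {1..k} \<rightarrow>\<^sub>E S. bij_betw \<pi> {1..k} S}"

definition prefix_xor :: "nat \<Rightarrow> (nat \<Rightarrow> bool) \<Rightarrow> (nat \<Rightarrow> nat) \<Rightarrow> bool list" where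
  "prefix_xor k x \<pi> = map (\<lambda>t. xor_list (map (\<lambda>s. x (\<pi> s)) [1..<t+1])) [1..<k+1]"

definition sample_pmf :: "nat \<Rightarrow> nat \<Rightarrow> nat set \<Rightarrow> sample pmf" where
  "sample_pmf d k S = do {
     x \<leftarrow> cube_pmf d;
     \<pi> \<leftarrow> bij_pmf k S;
     return_pmf (x, prefix_xor k x \<pi>)
   }"

definition subset_pmf :: "nat \<Rightarrow> nat \<Rightarrow> nat set pmf" where
  "subset_pmf d k = pmf_of_set {S. S \<subseteq> {1..d} \<and> card S = k}"

definition success_pmf :: "nat \<Rightarrow> nat \<Rightarrow> nat \<Rightarrow> (sample list \<Rightarrow> nat set pmf) \<Rightarrow> bool pmf" where
  "success_pmf d k m est = do {
     S \<leftarrow> subset_pmf d k;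
     smp \<leftarrow> replicate_pmf m (sample_pmf d k S);
     Sh \<leftarrow> est smp;
     return_pmf (Sh = S)
   }"

end

theory Submission
  imports Defs "HOL-Combinatorics.Permutations"
begin

definition cube :: "nat \<Rightarrow> (nat \<Rightarrow> bool) set" where
  "cube d = {1..d} \<rightarrow>\<^sub>E (UNIV :: bool set)"

definition BS :: "nat \<Rightarrow> nat set \<Rightarrow> (nat \<Rightarrow> nat) set" where
  "BS k S = {\<pi> \<in> {1..k} \<rightarrow>\<^sub>E S. bij_betw \<pi> {1..k} S}"

definition wseq :: "nat \<Rightarrow> (nat \<Rightarrow> bool) \<Rightarrow> (nat \<Rightarrow> nat) \<Rightarrow> bool list" where
  "wseq k x \<pi> = map (\<lambda>s. x (\<pi> s)) [1..<k+1]"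

definition gz :: "nat \<Rightarrow> bool list \<Rightarrow> bool list" where
  "gz k w = map (\<lambda>t. xor_list (take t w)) [1..<k+1]"

definition Wk :: "nat \<Rightarrow> bool list set" where
  "Wk k = {w. length w = k}"

definition cls :: "nat \<Rightarrow> bool list \<Rightarrow> bool list set" where
  "cls k w = {w' \<in> Wk k. mset w' = mset w}"

lemma finite_Wk: "finite (Wk k)"
proof -
  have "Wk k = {xs. set xs \<subseteq> (UNIV::bool set) \<and> length xs = k}" by (auto simp: Wk_def)
  thus ?thesis using finite_lists_length_eq[of "UNIV::bool set" k] by simp
qed

lemma finite_cls: "finite (cls k w)"
  using finite_Wk by (auto simp: cls_def)

lemma wseq_Wk: "wseq k x \<pi> \<in> Wk k"
  by (simp add: wseq_def Wk_def)

lemma prefix_gz: "prefix_xor k x \<pi> = gz k (wseq k x \<pi>)"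
  unfolding prefix_xor_def gz_def wseq_def
proof (intro map_cong refl)
  fix t assume "t \<in> set [1..<k+1]"
  hence "t \<le> k" by auto
  hence "take t [1..<k+1] = [1..<1+t]" by (intro take_upt) simp
  hence "take t [1..<k+1] = [1..<t+1]" by (simp only: add.commute)
  thus "xor_list (map (\<lambda>s. x (\<pi> s)) [1..<t+1]) = xor_list (take t (map (\<lambda>s. x (\<pi> s)) [1..<k+1]))"
    by (simp add: take_map)
qed

lemma finite_BS:
  assumes "finite S" shows "finite (BS k S)"
proof -
  have "finite ({1..k} \<rightarrow>\<^sub>E S)" using assms by (simp add: finite_PiE)
  moreover have "BS k S \<subseteq> {1..k} \<rightarrow>\<^sub>E S" unfolding BS_def by blast
  ultimately show ?thesis by (rule finite_subset[rotated])
qed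

lemma BS_ne: "finite S \<Longrightarrow> card S = k \<Longrightarrow> BS k S \<noteq> {}"
proof -
  assume "finite S" "card S = k"
  then obtain h where h: "bij_betw h {1..k} S"
    using finite_same_card_bij[of "{1..k}" S] by auto
  have "bij_betw (restrict h {1..k}) {1..k} S = bij_betw h {1..k} S"
    by (rule bij_betw_cong) simp
  hence b: "bij_betw (restrict h {1..k}) {1..k} S" using h by simp
  have "restrict h {1..k} \<in> {1..k} \<rightarrow>\<^sub>E S"
    unfolding restrict_PiE_iff using bij_betwE[OF h] by blast
  hence "restrict h {1..k} \<in> BS k S" using b unfolding BS_def by blast
  thus ?thesis by auto
qed

lemma perm_le:
  assumes fin: "finite S" and w: "w \<in> Wk k" and ms: "mset w = mset w'"
  shows "card {\<pi> \<in> BS k S. wseq k x \<pi> = w} \<le> card {\<pi> \<in> BS k S. wseq k x \<pi> = w'}"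
proof -
  have lw: "length w = k" using w by (simp add: Wk_def)
  obtain p where p: "p permutes {..<length w}" "permute_list p w = w'"
    using mset_eq_permutation[of w' w] ms by metis
  have pk: "p permutes {..<k}" using p lw by simp
  define \<sigma> where "\<sigma> s = p (s - 1) + 1" for s
  have \<sigma>in: "\<sigma> s \<in> {1..k}" if "s \<in> {1..k}" for s
    using that permutes_in_image[OF pk, of "s - 1"] by (auto simp: \<sigma>_def)
  have \<sigma>inj: "inj_on \<sigma> {1..k}"
  proof (rule inj_onI)
    fix s s' assume "s \<in> {1..k}" "s' \<in> {1..k}" "\<sigma> s = \<sigma> s'"
    hence "p (s - 1) = p (s' - 1)" by (simp add: \<sigma>_def)
    hence "s - 1 = s' - 1" using permutes_inj[OF pk] by (simp add: inj_eq)
    thus "s = s'" using \<open>s \<in> {1..k}\<close> \<open>s' \<in> {1..k}\<close> by auto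
  qed
  have \<sigma>img: "\<sigma> ` {1..k} = {1..k}"
    by (rule endo_inj_surj) (use \<sigma>in \<sigma>inj in auto)
  have \<sigma>bij: "bij_betw \<sigma> {1..k} {1..k}" using \<sigma>inj \<sigma>img by (simp add: bij_betw_def)
  define \<Phi> where "\<Phi> \<pi> = restrict (\<pi> \<circ> \<sigma>) {1..k}" for \<pi> :: "nat \<Rightarrow> nat"
  have wnth: "wseq k x \<pi> ! i = x (\<pi> (1 + i))" if "i < k" for \<pi> i
  proof -
    have "map (\<lambda>s. x (\<pi> s)) [1..<k+1] ! i = (\<lambda>s. x (\<pi> s)) (1 + i)"
      by (rule nth_map_upt) (use that in simp)
    thus ?thesis by (simp add: wseq_def del: upt_Suc)
  qed
  have into: "\<Phi> ` {\<pi> \<in> BS k S. wseq k x \<pi> = w} \<subseteq> {\<pi> \<in> BS k S. wseq k x \<pi> = w'}"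
  proof
    fix \<rho> assume "\<rho> \<in> \<Phi> ` {\<pi> \<in> BS k S. wseq k x \<pi> = w}"
    then obtain \<pi> where \<pi>0: "\<pi> \<in> {\<pi> \<in> BS k S. wseq k x \<pi> = w}" and r: "\<rho> = \<Phi> \<pi>" by (rule imageE)
    have \<pi>: "\<pi> \<in> BS k S" "wseq k x \<pi> = w" using \<pi>0 by simp_all
    have bp: "bij_betw \<pi> {1..k} S" using \<pi>(1) by (simp add: BS_def)
    have bc: "bij_betw (\<pi> \<circ> \<sigma>) {1..k} S" using bij_betw_trans[OF \<sigma>bij bp] .
    have "bij_betw \<rho> {1..k} S = bij_betw (\<pi> \<circ> \<sigma>) {1..k} S"
      by (rule bij_betw_cong) (simp add: r \<Phi>_def)
    hence b2: "bij_betw \<rho> {1..k} S" using bc by blast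
    have pe: "\<rho> \<in> {1..k} \<rightarrow>\<^sub>E S"
      unfolding r \<Phi>_def restrict_PiE_iff
    proof
      fix i assume "i \<in> {1..k}"
      hence "\<sigma> i \<in> {1..k}" by (rule \<sigma>in)
      hence "\<pi> (\<sigma> i) \<in> S" using bij_betwE[OF bp] by simp
      thus "(\<pi> \<circ> \<sigma>) i \<in> S" by simp
    qed
    have lw': "length w' = k" using p(2) lw length_permute_list by metis
    have "wseq k x \<rho> = w'"
    proof (rule nth_equalityI)
      show "length (wseq k x \<rho>) = length w'" using lw' by (simp add: wseq_def)
      fix i assume "i < length (wseq k x \<rho>)"
      hence i: "i < k" by (simp add: wseq_def del: upt_Suc)
      have pik: "p i < k" using permutes_in_image[OF pk, of i] i by simp
      have "1 + i \<in> {1..k}" using i by simp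
      hence "\<rho> (1 + i) = \<pi> (\<sigma> (1 + i))" by (simp add: r \<Phi>_def)
      also have "\<sigma> (1 + i) = 1 + p i" by (simp add: \<sigma>_def)
      finally have "wseq k x \<rho> ! i = x (\<pi> (1 + p i))" using wnth[OF i, of \<rho>] by simp
      moreover have "w' ! i = w ! p i"
        using permute_list_nth[OF p(1), of i] p(2) i lw by simp
      moreover have "w ! p i = x (\<pi> (1 + p i))" using \<pi>(2) wnth[OF pik, of \<pi>] by simp
      ultimately show "wseq k x \<rho> ! i = w' ! i" by simp
    qed
    thus "\<rho> \<in> {\<pi> \<in> BS k S. wseq k x \<pi> = w'}" using b2 pe by (simp only: BS_def mem_Collect_eq simp_thms)
  qed
  have inj: "inj_on \<Phi> {\<pi> \<in> BS k S. wseq k x \<pi> = w}"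
  proof (rule inj_onI)
    fix \<pi>1 \<pi>2 assume a: "\<pi>1 \<in> {\<pi> \<in> BS k S. wseq k x \<pi> = w}" "\<pi>2 \<in> {\<pi> \<in> BS k S. wseq k x \<pi> = w}"
      and e: "\<Phi> \<pi>1 = \<Phi> \<pi>2"
    have "\<pi>1 t = \<pi>2 t" if t: "t \<in> {1..k}" for t
    proof -
      have "t \<in> \<sigma> ` {1..k}" using t \<sigma>img by simp
      then obtain s where s: "s \<in> {1..k}" "t = \<sigma> s" by (rule imageE) simp
      have "\<Phi> \<pi>1 s = \<Phi> \<pi>2 s" using e by simp
      thus ?thesis using s by (simp add: \<Phi>_def)
    qed
    moreover have "\<pi>1 \<in> {1..k} \<rightarrow>\<^sub>E S" "\<pi>2 \<in> {1..k} \<rightarrow>\<^sub>E S" using a by (auto simp: BS_def)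
    ultimately show "\<pi>1 = \<pi>2" by (intro PiE_ext[of \<pi>1 "{1..k}" "\<lambda>_. S" \<pi>2]) auto
  qed
  show ?thesis
    by (rule card_inj_on_le[OF inj into]) (use finite_BS[OF fin] in auto)
qed

lemma cls_count:
  assumes fin: "finite S" and w: "w \<in> Wk k"
  shows "card (cls k w) * card {\<pi> \<in> BS k S. wseq k x \<pi> = w} \<le> card (BS k S)"
proof -
  define A where "A w' = {\<pi> \<in> BS k S. wseq k x \<pi> = w'}" for w'
  have "card (A w) \<le> card (A w')" if "w' \<in> cls k w" for w'
    unfolding A_def by (rule perm_le[OF fin w]) (use that in \<open>auto simp: cls_def\<close>)
  hence "card (cls k w) * card (A w) \<le> (\<Sum>w'\<in>cls k w. card (A w'))"
    using sum_bounded_below[of "cls k w" "card (A w)" "\<lambda>w'. card (A w')"] by simp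
  also have "\<dots> = card (\<Union>w'\<in>cls k w. A w')"
    by (rule card_UN_disjoint[symmetric])
       (use finite_cls finite_BS[OF fin] in \<open>auto simp: A_def\<close>)
  also have "\<dots> \<le> card (BS k S)"
    by (rule card_mono) (use finite_BS[OF fin] in \<open>auto simp: A_def\<close>)
  finally show ?thesis by (simp add: A_def)
qed

lemma card_cls_pos: "w \<in> Wk k \<Longrightarrow> card (cls k w) > 0"
  using finite_cls[of k w] by (auto simp: card_gt_0_iff cls_def)

lemma prefix_count:
  assumes fin: "finite S"
  shows "real (card {\<pi> \<in> BS k S. prefix_xor k x \<pi> = z})
     \<le> real (card (BS k S)) * (\<Sum>w\<in>{w \<in> Wk k. gz k w = z}. 1 / real (card (cls k w)))"
proof -
  define A where "A w' = {\<pi> \<in> BS k S. wseq k x \<pi> = w'}" for w'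
  have fW: "finite {w \<in> Wk k. gz k w = z}" using finite_Wk by auto
  have "{\<pi> \<in> BS k S. prefix_xor k x \<pi> = z} = (\<Union>w\<in>{w \<in> Wk k. gz k w = z}. A w)"
    by (auto simp: A_def prefix_gz wseq_Wk)
  hence "card {\<pi> \<in> BS k S. prefix_xor k x \<pi> = z} = card (\<Union>w\<in>{w \<in> Wk k. gz k w = z}. A w)"
    by simp
  also have "\<dots> = (\<Sum>w\<in>{w \<in> Wk k. gz k w = z}. card (A w))"
    by (rule card_UN_disjoint) (use fW finite_BS[OF fin] in \<open>auto simp: A_def\<close>)
  finally have "card {\<pi> \<in> BS k S. prefix_xor k x \<pi> = z} = (\<Sum>w\<in>{w \<in> Wk k. gz k w = z}. card (A w))" .
  hence "real (card {\<pi> \<in> BS k S. prefix_xor k x \<pi> = z}) = (\<Sum>w\<in>{w \<in> Wk k. gz k w = z}. real (card (A w)))"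
    by simp
  also have "\<dots> \<le> (\<Sum>w\<in>{w \<in> Wk k. gz k w = z}. real (card (BS k S)) * (1 / real (card (cls k w))))"
  proof (rule sum_mono)
    fix w assume "w \<in> {w \<in> Wk k. gz k w = z}"
    hence w: "w \<in> Wk k" by simp
    have "real (card (cls k w)) * real (card (A w)) \<le> real (card (BS k S))"
      using cls_count[OF fin w, of x] unfolding A_def of_nat_mult[symmetric] of_nat_le_iff .
    thus "real (card (A w)) \<le> real (card (BS k S)) * (1 / real (card (cls k w)))"
      using card_cls_pos[OF w] by (simp add: field_simps)
  qed
  also have "\<dots> = real (card (BS k S)) * (\<Sum>w\<in>{w \<in> Wk k. gz k w = z}. 1 / real (card (cls k w)))"
    by (simp add: sum_distrib_left)
  finally show ?thesis .
qed

lemma finite_cube: "finite (cube d)"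
  unfolding cube_def by (auto intro: finite_PiE)

lemma card_cube: "card (cube d) = 2 ^ d"
  unfolding cube_def by (simp add: card_PiE)

lemma cube_ne: "cube d \<noteq> {}"
  unfolding cube_def by (simp add: PiE_eq_empty_iff)

lemma pmf_sample:
  assumes fin: "finite S" and cS: "card S = k"
  shows "pmf (sample_pmf d k S) (x0, z) =
    (if x0 \<in> cube d then real (card {\<pi> \<in> BS k S. prefix_xor k x0 \<pi> = z}) / real (card (BS k S)) else 0) / 2 ^ d"
proof -
  have inner: "pmf (bij_pmf k S \<bind> (\<lambda>\<pi>. return_pmf (x, prefix_xor k x \<pi>))) (x0, z)
      = (if x = x0 then real (card {\<pi> \<in> BS k S. prefix_xor k x0 \<pi> = z}) / real (card (BS k S)) else 0)" for x
  proof -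
    have "pmf (bij_pmf k S \<bind> (\<lambda>\<pi>. return_pmf (x, prefix_xor k x \<pi>))) (x0, z)
        = (\<Sum>\<pi>\<in>BS k S. indicator {(x0, z)} (x, prefix_xor k x \<pi>)) / real (card (BS k S))"
      unfolding pmf_bind bij_pmf_def BS_def[symmetric]
      by (simp add: integral_pmf_of_set[OF BS_ne[OF fin cS] finite_BS[OF fin]])
    also have "(\<Sum>\<pi>\<in>BS k S. indicator {(x0, z)} (x, prefix_xor k x \<pi>) :: real)
        = (if x = x0 then real (card {\<pi> \<in> BS k S. prefix_xor k x0 \<pi> = z}) else 0)"
      by (auto simp: indicator_def sum.If_cases finite_BS[OF fin] Int_def)
    finally show ?thesis by simp
  qed
  have "pmf (sample_pmf d k S) (x0, z) = (\<integral>x. pmf (bij_pmf k S \<bind> (\<lambda>\<pi>. return_pmf (x, prefix_xor k x \<pi>))) (x0, z) \<partial>cube_pmf d)"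
    unfolding sample_pmf_def by (rule pmf_bind)
  also have "\<dots> = (\<integral>x. (if x = x0 then real (card {\<pi> \<in> BS k S. prefix_xor k x0 \<pi> = z}) / real (card (BS k S)) else 0) \<partial>cube_pmf d)"
    by (simp only: inner)
  also have "\<dots> = (\<Sum>x\<in>cube d. (if x = x0 then real (card {\<pi> \<in> BS k S. prefix_xor k x0 \<pi> = z}) / real (card (BS k S)) else 0)) / real (card (cube d))"
    unfolding cube_pmf_def cube_def[symmetric]
    by (rule integral_pmf_of_set[OF cube_ne finite_cube])
  also have "\<dots> = (if x0 \<in> cube d then real (card {\<pi> \<in> BS k S. prefix_xor k x0 \<pi> = z}) / real (card (BS k S)) else 0) / 2 ^ d"
    by (simp add: card_cube finite_cube sum.delta)
  finally show ?thesis .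
qed

definition fw :: "nat \<Rightarrow> bool list \<Rightarrow> real" where
  "fw k w = 1 / real (card (cls k w))"

definition bb :: "nat \<Rightarrow> nat \<Rightarrow> sample \<Rightarrow> real" where
  "bb d k s = (if fst s \<in> cube d then 1 / 2 ^ d else 0) * (\<Sum>w\<in>{w \<in> Wk k. gz k w = snd s}. fw k w)"

lemma bb_nonneg: "bb d k s \<ge> 0"
  unfolding bb_def fw_def by (auto intro!: sum_nonneg divide_nonneg_nonneg)

lemma pmf_sample_le:
  assumes fin: "finite S" and cS: "card S = k"
  shows "pmf (sample_pmf d k S) s \<le> bb d k s"
proof -
  obtain x0 z where s: "s = (x0, z)" by force
  have pos: "real (card (BS k S)) > 0" using BS_ne[OF fin cS] finite_BS[OF fin] by (simp add: card_gt_0_iff)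
  have "real (card {\<pi> \<in> BS k S. prefix_xor k x0 \<pi> = z}) / real (card (BS k S))
      \<le> (\<Sum>w\<in>{w \<in> Wk k. gz k w = z}. fw k w)"
    using prefix_count[OF fin, of k x0 z] pos unfolding fw_def by (simp add: field_simps)
  thus ?thesis unfolding s pmf_sample[OF fin cS] bb_def
    by (auto simp: field_simps)
qed

definition Samp :: "nat \<Rightarrow> nat \<Rightarrow> sample set" where
  "Samp d k = cube d \<times> gz k ` Wk k"

lemma finite_Samp: "finite (Samp d k)"
  unfolding Samp_def using finite_cube finite_Wk by auto

lemma bb_zero: "s \<notin> Samp d k \<Longrightarrow> bb d k s = 0"
proof (cases s)
  case (Pair a b)
  assume ns: "s \<notin> Samp d k"
  show ?thesis
  proof (cases "a \<in> cube d")
    case True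
    hence "b \<notin> gz k ` Wk k" using ns Pair by (auto simp: Samp_def)
    hence "{w \<in> Wk k. gz k w = b} = {}" by auto
    thus ?thesis using Pair by (simp only: bb_def fst_conv snd_conv sum.empty mult_zero_right)
  qed (simp add: bb_def Pair)
qed

lemma set_sample:
  assumes fin: "finite S" and cS: "card S = k"
  shows "set_pmf (sample_pmf d k S) \<subseteq> Samp d k"
proof
  fix s assume "s \<in> set_pmf (sample_pmf d k S)"
  hence "pmf (sample_pmf d k S) s > 0" by (simp add: pmf_positive)
  hence "bb d k s \<noteq> 0" using pmf_sample_le[OF fin cS, of d s] by auto
  thus "s \<in> Samp d k" using bb_zero by blast
qed

lemma mset_Wk_sub: "mset ` Wk k \<subseteq> (\<lambda>c. replicate_mset c True + replicate_mset (k - c) False) ` {0..k}"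
proof
  fix M assume "M \<in> mset ` Wk k"
  then obtain w where w: "length w = k" "M = mset w" by (auto simp: Wk_def)
  define c where "c = count (mset w) True"
  have cf: "count (mset w) True + count (mset w) False = k"
  proof -
    have "size (mset w) = k" using w by simp
    moreover have "size (mset w) = count (mset w) True + count (mset w) False"
      by (induction w) auto
    ultimately show ?thesis by simp
  qed
  have "mset w = replicate_mset c True + replicate_mset (k - c) False"
  proof (rule multiset_eqI)
    fix a show "count (mset w) a = count (replicate_mset c True + replicate_mset (k - c) False) a"
      using cf by (cases a) (auto simp: c_def)
  qed
  moreover have "c \<le> k" using cf c_def by simp
  ultimately show "M \<in> (\<lambda>c. replicate_mset c True + replicate_mset (k - c) False) ` {0..k}"
    using w by auto
qed

lemma sum_fw: "(\<Sum>w\<in>Wk k. fw k w) \<le> real k + 1"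
proof -
  have "(\<Sum>w\<in>Wk k. fw k w) = (\<Sum>M\<in>mset ` Wk k. \<Sum>w\<in>{w \<in> Wk k. mset w = M}. fw k w)"
    by (rule sum.group[symmetric]) (auto simp: finite_Wk)
  also have "\<dots> = (\<Sum>M\<in>mset ` Wk k. 1)"
  proof (rule sum.cong[OF refl])
    fix M assume "M \<in> mset ` Wk k"
    then obtain w0 where w0: "w0 \<in> Wk k" "M = mset w0" by auto
    have e: "cls k w = {w \<in> Wk k. mset w = M}" if "w \<in> {w \<in> Wk k. mset w = M}" for w
      using that by (auto simp: cls_def)
    have ne: "{w \<in> Wk k. mset w = M} \<noteq> {}" using w0 by auto
    have fi: "finite {w \<in> Wk k. mset w = M}" using finite_Wk by auto
    have "(\<Sum>w\<in>{w \<in> Wk k. mset w = M}. fw k w) = (\<Sum>w\<in>{w \<in> Wk k. mset w = M}. 1 / real (card {w \<in> Wk k. mset w = M}))"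
      by (rule sum.cong[OF refl]) (simp add: fw_def e)
    also have "\<dots> = 1" using ne fi by simp
    finally show "(\<Sum>w\<in>{w \<in> Wk k. mset w = M}. fw k w) = 1" .
  qed
  also have "\<dots> = real (card (mset ` Wk k))" by simp
  also have "\<dots> \<le> real (card ((\<lambda>c. replicate_mset c True + replicate_mset (k - c) False) ` {0..k}))"
    using card_mono[OF _ mset_Wk_sub] by (simp)
  also have "\<dots> \<le> real (card {0..k})" using card_image_le[of "{0..k}"] by (simp del: card_atLeastAtMost)
  finally show ?thesis by simp
qed

lemma sum_bb: "(\<Sum>s\<in>Samp d k. bb d k s) \<le> real k + 1"
proof -
  have "(\<Sum>s\<in>Samp d k. bb d k s) = (\<Sum>x\<in>cube d. \<Sum>z\<in>gz k ` Wk k. bb d k (x, z))"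
    unfolding Samp_def by (subst sum.cartesian_product) (simp add: case_prod_unfold)
  also have "\<dots> = (\<Sum>x\<in>cube d. 1 / 2 ^ d * (\<Sum>z\<in>gz k ` Wk k. \<Sum>w\<in>{w \<in> Wk k. gz k w = z}. fw k w))"
    by (rule sum.cong[OF refl]) (simp add: bb_def sum_distrib_left)
  also have "\<dots> = (\<Sum>x\<in>cube d. 1 / 2 ^ d * (\<Sum>w\<in>Wk k. fw k w))"
    by (subst sum.group) (auto simp: finite_Wk)
  also have "\<dots> = (\<Sum>w\<in>Wk k. fw k w)"
    by (simp add: card_cube)
  finally show ?thesis using sum_fw by simp
qed

lemma rep_Suc: "replicate_pmf (Suc n) p = map_pmf (\<lambda>(x, xs). x # xs) (pair_pmf p (replicate_pmf n p))"
  by (simp add: pair_pmf_def map_pmf_def bind_assoc_pmf bind_return_pmf)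

lemma pmf_rep: "pmf (replicate_pmf n p) xs = (if length xs = n then prod_list (map (pmf p) xs) else 0)"
proof (induction n arbitrary: xs)
  case 0
  then show ?case by (cases xs) auto
next
  case (Suc n)
  show ?case
  proof (cases xs)
    case Nil
    have "pmf (replicate_pmf (Suc n) p) [] = 0"
      unfolding rep_Suc by (simp add: pmf_map vimage_def split_beta)
    then show ?thesis using Nil by simp
  next
    case (Cons y ys)
    have inj: "inj (\<lambda>(x, xs). x # xs)" by (auto simp: inj_def)
    have "pmf (replicate_pmf (Suc n) p) (y # ys) = pmf (pair_pmf p (replicate_pmf n p)) (y, ys)"
      unfolding rep_Suc using pmf_map_inj'[OF inj, of _ "(y, ys)"] by simp
    then show ?thesis using Cons Suc.IH by (simp add: pmf_pair)
  qed
qed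

lemma sum_lists:
  fixes b :: "'a \<Rightarrow> real"
  assumes "finite A"
  shows "(\<Sum>xs\<in>{xs \<in> lists A. length xs = n}. prod_list (map b xs)) = (\<Sum>a\<in>A. b a) ^ n"
proof (induction n)
  case 0
  have "{xs \<in> lists A. length xs = 0} = {[]}" by auto
  then show ?case by simp
next
  case (Suc n)
  have e: "{xs \<in> lists A. length xs = Suc n} = (\<lambda>(x, xs). x # xs) ` (A \<times> {xs \<in> lists A. length xs = n})"
    by (auto simp: length_Suc_conv image_def)
  have inj: "inj_on (\<lambda>(x, xs). x # xs) (A \<times> {xs \<in> lists A. length xs = n})"
    by (auto simp: inj_on_def)
  have fl: "finite {xs \<in> lists A. length xs = n}"
    using finite_lists_length_eq[OF assms, of n] by (simp add: lists_eq_set)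
  have "(\<Sum>xs\<in>{xs \<in> lists A. length xs = Suc n}. prod_list (map b xs))
      = (\<Sum>(x, xs)\<in>A \<times> {xs \<in> lists A. length xs = n}. b x * prod_list (map b xs))"
    unfolding e by (subst sum.reindex[OF inj]) (simp add: case_prod_unfold)
  also have "\<dots> = (\<Sum>x\<in>A. \<Sum>xs\<in>{xs \<in> lists A. length xs = n}. b x * prod_list (map b xs))"
    by (rule sum.cartesian_product[symmetric])
  also have "\<dots> = (\<Sum>x\<in>A. b x * (\<Sum>xs\<in>{xs \<in> lists A. length xs = n}. prod_list (map b xs)))"
    by (simp only: sum_distrib_left)
  also have "\<dots> = (\<Sum>x\<in>A. b x) * (\<Sum>xs\<in>{xs \<in> lists A. length xs = n}. prod_list (map b xs))"
    by (simp only: sum_distrib_right)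
  finally show ?case using Suc.IH by simp
qed

lemma prod_list_mono2:
  fixes f g :: "'a \<Rightarrow> real"
  assumes "\<And>x. x \<in> set xs \<Longrightarrow> 0 \<le> f x \<and> f x \<le> g x"
  shows "0 \<le> prod_list (map f xs) \<and> prod_list (map f xs) \<le> prod_list (map g xs)"
  using assms
proof (induction xs)
  case Nil then show ?case by simp
next
  case (Cons a xs)
  have IH: "0 \<le> prod_list (map f xs) \<and> prod_list (map f xs) \<le> prod_list (map g xs)"
    using Cons by simp
  have fa: "0 \<le> f a" "f a \<le> g a" using Cons.prems[of a] by auto
  show ?case using IH fa by (auto intro: mult_mono mult_nonneg_nonneg)
qed

lemma final_arith:
  fixes N K p :: real and m :: nat
  assumes N: "N \<ge> 1" and K: "K \<ge> 2" and p0: "0 \<le> p" and p1: "p \<le> 1" and pb: "p \<le> K ^ m / N"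
  shows "real m \<ge> (p * ln N - 1) / ln K"
proof -
  have lK: "ln K > 0" using K by simp
  define t where "t = real m * ln K"
  define L where "L = ln N"
  have t0: "t \<ge> 0" using lK by (simp add: t_def)
  have L0: "L \<ge> 0" using N by (simp add: L_def)
  have et: "exp t = K ^ m" using K by (simp add: t_def ln_realpow[symmetric])
  have eL: "exp L = N" using N by (simp add: L_def)
  have main: "p * L - 1 \<le> t"
  proof (cases "t \<ge> L")
    case True
    have "p * L \<le> 1 * L" using p1 L0 by (intro mult_right_mono) auto
    thus ?thesis using True by simp
  next
    case False
    define u where "u = L - t"
    have u0: "u > 0" using False by (simp add: u_def)
    have "p \<le> exp t / exp L" using pb et eL by simp
    also have "exp t / exp L = exp (- u)" by (simp add: u_def exp_diff exp_minus field_simps)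
    finally have pu: "p \<le> exp (- u)" .
    have "p * L \<le> exp (- u) * L" using pu L0 by (rule mult_right_mono)
    also have "\<dots> = exp (- u) * t + exp (- u) * u" by (simp add: u_def algebra_simps)
    also have "exp (- u) * t \<le> t" by (rule mult_left_le_one_le) (use t0 u0 in auto)
    also have "exp (- u) * u \<le> 1"
    proof -
      have "u \<le> exp u" using exp_ge_add_one_self[of u] by linarith
      hence "exp (- u) * u \<le> exp (- u) * exp u" by (intro mult_left_mono) auto
      thus ?thesis by (simp add: exp_minus field_simps)
    qed
    finally show ?thesis by simp
  qed
  show ?thesis using main lK by (simp add: pos_divide_le_eq t_def L_def)
qed

lemma success_bound:
  assumes kd: "k \<le> d"
  shows "measure_pmf.prob (success_pmf d k m est) {True} \<le> (real k + 1) ^ m / real (d choose k)"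
proof -
  define Sset where "Sset = {S. S \<subseteq> {1..d} \<and> card S = k}"
  define D where "D = {xs \<in> lists (Samp d k). length xs = m}"
  define B where "B xs = prod_list (map (bb d k) xs)" for xs
  have fSset: "finite Sset" unfolding Sset_def by simp
  have cSset: "card Sset = d choose k" unfolding Sset_def using n_subsets[of "{1..d}" k] by simp
  have Sne: "Sset \<noteq> {}"
  proof -
    have "{1..k} \<in> Sset" using kd by (auto simp: Sset_def)
    thus ?thesis by auto
  qed
  have Sfin: "finite S" "card S = k" if "S \<in> Sset" for S
    using that finite_subset[of S "{1..d}"] by (auto simp: Sset_def)
  have fD: "finite D"
    using finite_lists_length_eq[OF finite_Samp[of d k], of m] by (simp add: D_def lists_eq_set)
  have succ: "success_pmf d k m est = subset_pmf d k \<bind> (\<lambda>S. replicate_pmf m (sample_pmf d k S) \<bind> (\<lambda>smp. map_pmf (\<lambda>Sh. Sh = S) (est smp)))"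
    by (simp add: success_pmf_def map_pmf_def)
  have pm: "pmf (map_pmf (\<lambda>Sh. Sh = S) M) True = pmf M S" for M :: "nat set pmf" and S
  proof -
    have "(\<lambda>Sh. Sh = S) -` {True} = {S}" by auto
    thus ?thesis by (simp add: pmf_map measure_pmf_single)
  qed
  define I where "I S = (\<integral>smp. pmf (est smp) S \<partial>replicate_pmf m (sample_pmf d k S))" for S
  have P: "measure_pmf.prob (success_pmf d k m est) {True} = (\<integral>S. I S \<partial>subset_pmf d k)"
    unfolding measure_pmf_single succ pmf_bind pm I_def ..
  also have "\<dots> = (\<Sum>S\<in>Sset. I S) / real (card Sset)"
    unfolding subset_pmf_def Sset_def[symmetric] by (rule integral_pmf_of_set[OF Sne fSset])
  finally have P: "measure_pmf.prob (success_pmf d k m est) {True} = (\<Sum>S\<in>Sset. I S) / real (card Sset)" .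
  have IS: "I S \<le> (\<Sum>smp\<in>D. pmf (est smp) S * B smp)" if S: "S \<in> Sset" for S
  proof -
    have "I S = (\<Sum>smp\<in>D. pmf (est smp) S * pmf (replicate_pmf m (sample_pmf d k S)) smp)"
      unfolding I_def
    proof (rule integral_measure_pmf_real[OF fD])
      fix smp assume "smp \<in> set_pmf (replicate_pmf m (sample_pmf d k S))"
      thus "smp \<in> D" using set_sample[OF Sfin[OF S], of d]
        by (auto simp: set_replicate_pmf D_def)
    qed
    also have "\<dots> \<le> (\<Sum>smp\<in>D. pmf (est smp) S * B smp)"
    proof (rule sum_mono)
      fix smp assume "smp \<in> D"
      hence l: "length smp = m" by (simp add: D_def)
      have "pmf (replicate_pmf m (sample_pmf d k S)) smp = prod_list (map (pmf (sample_pmf d k S)) smp)"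
        using l by (simp add: pmf_rep)
      also have "\<dots> \<le> B smp" unfolding B_def
        using prod_list_mono2[of smp "pmf (sample_pmf d k S)" "bb d k"] pmf_sample_le[OF Sfin[OF S]]
        by auto
      finally show "pmf (est smp) S * pmf (replicate_pmf m (sample_pmf d k S)) smp \<le> pmf (est smp) S * B smp"
        by (intro mult_left_mono) auto
    qed
    finally show ?thesis .
  qed
  have "(\<Sum>S\<in>Sset. I S) \<le> (\<Sum>S\<in>Sset. \<Sum>smp\<in>D. pmf (est smp) S * B smp)"
    by (rule sum_mono) (rule IS)
  also have "\<dots> = (\<Sum>smp\<in>D. B smp * (\<Sum>S\<in>Sset. pmf (est smp) S))"
    by (subst sum.swap) (simp add: sum_distrib_left mult.commute)
  also have "\<dots> \<le> (\<Sum>smp\<in>D. B smp)"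
  proof (rule sum_mono)
    fix smp assume "smp \<in> D"
    have B0: "0 \<le> B smp" unfolding B_def using prod_list_mono2[of smp "bb d k" "bb d k"] bb_nonneg by auto
    have "(\<Sum>S\<in>Sset. pmf (est smp) S) = measure_pmf.prob (est smp) Sset"
      by (simp add: measure_measure_pmf_finite fSset)
    also have "\<dots> \<le> 1" by simp
    finally show "B smp * (\<Sum>S\<in>Sset. pmf (est smp) S) \<le> B smp"
      using B0 by (simp add: mult_left_le)
  qed
  also have "\<dots> = (\<Sum>s\<in>Samp d k. bb d k s) ^ m"
    unfolding D_def B_def by (rule sum_lists[OF finite_Samp])
  also have "\<dots> \<le> (real k + 1) ^ m"
    by (rule power_mono[OF sum_bb]) (simp add: sum_nonneg bb_nonneg)
  finally have "(\<Sum>S\<in>Sset. I S) \<le> (real k + 1) ^ m" .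
  thus ?thesis unfolding P cSset by (simp add: divide_right_mono)
qed

theorem theorem11p2:
  fixes d k m :: nat and \<delta> :: real and est :: "sample list \<Rightarrow> nat set pmf"
  assumes "1 \<le> k" and "k \<le> d - 1"
    and "0 \<le> \<delta>" and "\<delta> \<le> 1"
    and "measure_pmf.prob (success_pmf d k m est) {True} \<ge> 1 - \<delta>"
  shows "real m \<ge> ((1 - \<delta>) * ln (real (d choose k)) - 1) / ln (real k + 1)
       \<and> (2 * k \<le> d \<longrightarrow>
         real m \<ge> ((1 - \<delta>) * real k * ln (real d / real k) - 1) / ln (real k + 1))"
proof -
  have kd: "k \<le> d" using assms(1,2) by linarith
  have N1: "real (d choose k) \<ge> 1"
    using kd zero_less_binomial_iff[of d k] by (simp add: Suc_le_eq)
  have p: "1 - \<delta> \<le> (real k + 1) ^ m / real (d choose k)"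
    using assms(5) success_bound[OF kd, of m est] by linarith
  have first: "real m \<ge> ((1 - \<delta>) * ln (real (d choose k)) - 1) / ln (real k + 1)"
    by (rule final_arith[OF N1 _ _ _ p]) (use assms in auto)
  have lk: "ln (real k + 1) > 0" using assms(1) by simp
  have "real k * ln (real d / real k) \<le> ln (real (d choose k))"
  proof -
    have pos: "real d / real k > 0" using assms(1) kd by simp
    have "(real d / real k) ^ k \<le> real (d choose k)" using binomial_ge_n_over_k_pow_k[OF kd] by simp
    hence "ln ((real d / real k) ^ k) \<le> ln (real (d choose k))"
      using pos kd by (subst ln_le_cancel_iff) auto
    thus ?thesis using pos by (simp add: ln_realpow)
  qed
  hence "(1 - \<delta>) * (real k * ln (real d / real k)) \<le> (1 - \<delta>) * ln (real (d choose k))"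
    using assms(4) by (intro mult_left_mono) auto
  hence "((1 - \<delta>) * real k * ln (real d / real k) - 1) / ln (real k + 1)
      \<le> ((1 - \<delta>) * ln (real (d choose k)) - 1) / ln (real k + 1)"
    using lk by (intro divide_right_mono) (auto simp: mult.assoc)
  thus ?thesis using first by linarith
qed

end
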